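(* For every integer $j\ge 0$, $f^*(3j+1,2)=2j+1$.
   Context: For integers $d\ge 1$, $n\ge 1$, the triangular grid is $T_d(n)=\{(x_1,\dots,x_d)\in\mathbb{Z}_{\ge 0}^d : x_1+\dots+x_d\le n-1\}$. A fractional cover of $T_d(n)$ is an assignment of nonnegative weights $w(H)$ to affine hyperplanes $H$ of $\mathbb{R}^d$ (only finitely many nonzero) such that $\sum_{H\ni p} w(H)\ge 1$ for every $p\in T_d(n)$. $f^*(n,d)$ denotes the minimum of $\sum_H w(H)$ over all fractional covers of $T_d(n)$. For $d=2$, hyperplanes are lines. *)

theory Defs
  imports Complex_Main
begin

text \<open>Points of R^d are represented as functions nat => real vanishing outside {0..<d}.\<close>

definition euclid_pts :: "nat \<Rightarrow> (nat \<Rightarrow> real) set" where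
  "euclid_pts d = {x. \<forall>i\<ge>d. x i = 0}"

definition affine_hyperplane :: "nat \<Rightarrow> (nat \<Rightarrow> real) set \<Rightarrow> bool" where
  "affine_hyperplane d H \<longleftrightarrow>
     (\<exists>a b. (\<exists>i<d. a i \<noteq> 0) \<and> H = {x \<in> euclid_pts d. (\<Sum>i<d. a i * x i) = b})"

definition tri_grid :: "nat \<Rightarrow> nat \<Rightarrow> (nat \<Rightarrow> real) set" where
  "tri_grid d n = {(\<lambda>i. real (c i)) | c. (\<forall>i\<ge>d. c i = 0) \<and> (\<Sum>i<d. c i) + 1 \<le> n}"

definition frac_cover :: "nat \<Rightarrow> nat \<Rightarrow> ((nat \<Rightarrow> real) set \<Rightarrow> real) \<Rightarrow> bool" where
  "frac_cover d n w \<longleftrightarrow>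
     (\<forall>H. 0 \<le> w H) \<and>
     (\<forall>H. w H \<noteq> 0 \<longrightarrow> affine_hyperplane d H) \<and>
     finite {H. w H \<noteq> 0} \<and>
     (\<forall>p \<in> tri_grid d n. (\<Sum>H \<in> {H. w H \<noteq> 0 \<and> p \<in> H}. w H) \<ge> 1)"

definition total_weight :: "((nat \<Rightarrow> real) set \<Rightarrow> real) \<Rightarrow> real" where
  "total_weight w = (\<Sum>H \<in> {H. w H \<noteq> 0}. w H)"

definition f_star :: "nat \<Rightarrow> nat \<Rightarrow> real" where
  "f_star n d = Inf {total_weight w | w. frac_cover d n w}"

end

theory Submission
  imports Defs
begin


definition inS :: "nat \<Rightarrow> nat \<Rightarrow> nat \<Rightarrow> bool" where
 "inS j x y \<longleftrightarrow> (x \<le> j \<and> j \<le> x + y \<and> y < j) \<or> (x \<le> j \<and> j + x \<le> y \<and> y \<le> 2*j)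
     \<or> (j < x \<and> x \<le> 2*j \<and> y + j < x) \<or> (j < x \<and> j \<le> y \<and> x + y \<le> 3*j)"

lemma inS_hex: "inS j x y \<Longrightarrow> x \<le> 2*j \<and> y \<le> 2*j \<and> j \<le> x + y \<and> x + y \<le> 3*j"
  unfolding inS_def by auto

lemma rowX_eq1: "c \<le> j \<Longrightarrow> {y. inS j c y} = {j-c..<j} \<union> {j+c..2*j}"
  unfolding inS_def by auto

lemma rowX_eq2: "j < c \<Longrightarrow> c \<le> 2*j \<Longrightarrow> {y. inS j c y} = {..<c-j} \<union> {j..3*j-c}"
  unfolding inS_def by auto

lemma rowX_card: assumes "c \<le> 2*j" shows "card {y. inS j c y} = j+1"
proof (cases "c \<le> j")
  case True
  have d: "{j-c..<j} \<inter> {j+c..2*j} = {}" by auto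
  show ?thesis unfolding rowX_eq1[OF True] by (subst card_Un_disjoint) (use True d in auto)
next
  case False
  have d: "{..<c-j} \<inter> {j..3*j-c} = {}" using False assms by auto
  have eq: "{y. inS j c y} = {..<c-j} \<union> {j..3*j-c}" using False assms by (intro rowX_eq2) auto
  show ?thesis unfolding eq
    by (subst card_Un_disjoint) (use False d assms in auto)
qed

lemma rowX_empty: "2*j < c \<Longrightarrow> {y. inS j c y} = {}"
  using inS_hex by fastforce

lemma rowX_le: "card {y. inS j c y} \<le> j+1"
  using rowX_card rowX_empty by (cases "c \<le> 2*j") auto

lemma rowY_le: "card {x. inS j x c} \<le> j+1"
proof -
  consider "c < j" | "j \<le> c" "c \<le> 2*j" | "2*j < c" by linarith
  then show ?thesis
  proof cases
    case 1
    have "{x. inS j x c} \<subseteq> {j-c..j} \<union> {c+j+1..2*j}" using 1 unfolding inS_def by auto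
    then have "card {x. inS j x c} \<le> card ({j-c..j} \<union> {c+j+1..2*j})" by (intro card_mono) auto
    also have "\<dots> \<le> card {j-c..j} + card {c+j+1..2*j}" by (rule card_Un_le)
    also have "\<dots> = j + 1" using 1 by simp
    finally show ?thesis .
  next
    case 2
    have "{x. inS j x c} \<subseteq> {..c-j} \<union> {j+1..3*j-c}" using 2 unfolding inS_def by auto
    then have "card {x. inS j x c} \<le> card ({..c-j} \<union> {j+1..3*j-c})" by (intro card_mono) auto
    also have "\<dots> \<le> card {..c-j} + card {j+1..3*j-c}" by (rule card_Un_le)
    also have "\<dots> = j + 1" using 2 by simp
    finally show ?thesis .
  next
    case 3
    then have "{x. inS j x c} = {}" using inS_hex by fastforce
    then show ?thesis by simp
  qed
qed

lemma A1: fixes c j q :: nat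
  assumes "j \<le> c" "c \<le> 3*j" "2*q \<le> c - j" "c - j \<le> 2*q+1"
  shows "Suc j - (c-j+1) + (Suc q - (c-2*j)) + (Suc (min c (2*j)) - (q + j + 1)) + (Suc(c-j) - (j+1)) \<le> j+1"
proof (cases "c \<le> 2*j")
  case True
  have h1: "Suc j - (c-j+1) = 2*j - c" using True assms by simp
  have h2: "Suc q - (c-2*j) = Suc q" using True by simp
  have h3: "Suc (min c (2*j)) - (q + j + 1) = c - (q + j)" using True by simp
  have h4: "Suc (c-j) - (j+1) = 0" using True by simp
  have "q + j \<le> c" using assms by linarith
  then show ?thesis unfolding h1 h2 h3 h4 using True by linarith
next
  case False
  have h1: "Suc j - (c-j+1) = 0" using False assms by simp
  have h2: "Suc q - (c-2*j) = Suc q - (c - 2*j)" by simp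
  have h3: "Suc (min c (2*j)) - (q + j + 1) = 2*j - (q + j)" using False by simp
  have h4: "Suc (c-j) - (j+1) = c - 2*j" using False by simp
  have "c - 2*j \<le> Suc q" "q + j \<le> 2*j" using assms False by linarith+
  then show ?thesis unfolding h1 h3 h4 using False assms by linarith
qed
lemma rowZ_sub:
  assumes "j \<le> c" "c \<le> 3*j"
  shows "{x. x \<le> c \<and> inS j x (c-x)} \<subseteq> {c-j+1..j} \<union> {c-2*j..(c-j) div 2} \<union> {(c+j) div 2 + 1..min c (2*j)} \<union> {j+1..c-j}"
proof
  fix x assume "x \<in> {x. x \<le> c \<and> inS j x (c-x)}"
  then have x: "x \<le> c" "inS j x (c-x)" by auto
  have d1: "x \<le> (c-j) div 2 \<longleftrightarrow> 2*x \<le> c - j" by auto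
  have d2: "(c+j) div 2 + 1 \<le> x \<longleftrightarrow> c + j < 2*x" by auto
  from x(2) consider "x \<le> j \<and> j \<le> x + (c-x) \<and> c-x < j" | "x \<le> j \<and> j + x \<le> c-x \<and> c-x \<le> 2*j"
     | "j < x \<and> x \<le> 2*j \<and> c-x + j < x" | "j < x \<and> j \<le> c-x \<and> x + (c-x) \<le> 3*j"
    unfolding inS_def by blast
  then show "x \<in> {c-j+1..j} \<union> {c-2*j..(c-j) div 2} \<union> {(c+j) div 2 + 1..min c (2*j)} \<union> {j+1..c-j}"
  proof cases
    case 1 then have "x \<in> {c-j+1..j}" using x by auto
    then show ?thesis by blast
  next
    case 2 then have "x \<in> {c-2*j..(c-j) div 2}" using x unfolding atLeastAtMost_iff d1 by linarith
    then show ?thesis by blast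
  next
    case 3 then have "x \<in> {(c+j) div 2 + 1..min c (2*j)}" using x unfolding atLeastAtMost_iff d2 by auto
    then show ?thesis by blast
  next
    case 4 then have "x \<in> {j+1..c-j}" using x by auto
    then show ?thesis by blast
  qed
qed

lemma rowZ_le: "card {x. x \<le> c \<and> inS j x (c-x)} \<le> j+1"
proof (cases "j \<le> c \<and> c \<le> 3*j")
  case True
  let ?A = "{c-j+1..j}" and ?B = "{c-2*j..(c-j) div 2}" and ?C = "{(c+j) div 2 + 1..min c (2*j)}" and ?D = "{j+1..c-j}"
  have "card {x. x \<le> c \<and> inS j x (c-x)} \<le> card (?A \<union> ?B \<union> ?C \<union> ?D)"
    using rowZ_sub[of j c] True by (intro card_mono) auto
  also have "\<dots> \<le> card ?A + card ?B + card ?C + card ?D"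
    by (meson add_le_mono card_Un_le le_refl order_trans)
  also have "\<dots> \<le> j+1"
  proof -
    have e: "(c+j) div 2 = (c-j) div 2 + j"
    proof -
      have "c + j = (c-j) + 2*j" using True by simp
      then show ?thesis by simp
    qed
    have q1: "2*((c-j) div 2) \<le> c - j" "c - j \<le> 2*((c-j) div 2) + 1" by auto
    show ?thesis unfolding e using A1[of j c "(c-j) div 2"] True q1 by simp
  qed
  finally show ?thesis .
next
  case False
  then have "{x. x \<le> c \<and> inS j x (c-x)} = {}" by (force dest: inS_hex)
  then show ?thesis by (metis card.empty zero_le)
qed



lemma sep_card:
  fixes B :: "'a set" and g :: "'a \<Rightarrow> nat"
  assumes "finite B" "\<And>s. s \<in> B \<Longrightarrow> g s \<le> 2*j"
    "\<And>s t. s \<in> B \<Longrightarrow> t \<in> B \<Longrightarrow> s \<noteq> t \<Longrightarrow> g s + 2 \<le> g t \<or> g t + 2 \<le> g s"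
  shows "card B \<le> j+1"
proof -
  have inj: "inj_on (\<lambda>s. g s div 2) B"
  proof (rule inj_onI)
    fix s t assume "s \<in> B" "t \<in> B" "g s div 2 = g t div 2"
    show "s = t"
    proof (rule ccontr)
      assume "s \<noteq> t"
      then have "g s + 2 \<le> g t \<or> g t + 2 \<le> g s" using assms(3) \<open>s \<in> B\<close> \<open>t \<in> B\<close> by blast
      moreover have "2*(g s div 2) \<le> g s" "g s \<le> 2*(g s div 2) + 1" "2*(g t div 2) \<le> g t" "g t \<le> 2*(g t div 2) + 1" by auto
      ultimately show False using \<open>g s div 2 = g t div 2\<close> by linarith
    qed
  qed
  have "(\<lambda>s. g s div 2) ` B \<subseteq> {..j}"
  proof (rule image_subsetI)
    fix s assume "s \<in> B"
    then have "g s \<le> 2*j" by (rule assms(2))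
    then have "g s div 2 \<le> (2*j) div 2" by (rule div_le_mono)
    then show "g s div 2 \<in> {..j}" by simp
  qed
  then have "card ((\<lambda>s. g s div 2) ` B) \<le> card {..j}" by (intro card_mono) auto
  then show ?thesis using card_image[OF inj] by simp
qed

lemma sepA:
  fixes a0 a1 :: real and DX DY :: int
  assumes "a0 * of_int DX + a1 * of_int DY = 0" "a0*a1 > 0" "\<bar>a0\<bar> < \<bar>a1\<bar>" "DX \<noteq> 0 \<or> DY \<noteq> 0"
  shows "\<bar>DX\<bar> \<ge> 2"
proof -
  have a0: "a0 \<noteq> 0" and a1: "a1 \<noteq> 0" using assms(2) by auto
  have DY: "DY \<noteq> 0"
  proof
    assume "DY = 0" then have "a0 * of_int DX = 0" using assms(1) by simp
    then have "DX = 0" using a0 by simp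
    then show False using assms(4) \<open>DY = 0\<close> by simp
  qed
  have e: "\<bar>a1\<bar> * \<bar>of_int DY\<bar> = \<bar>a0\<bar> * \<bar>of_int DX\<bar>"
  proof -
    have "a1 * of_int DY = - (a0 * of_int DX)" using assms(1) by linarith
    then have "\<bar>a1 * of_int DY\<bar> = \<bar>a0 * of_int DX\<bar>" by simp
    then show ?thesis by (simp add: abs_mult)
  qed
  have "\<bar>a0\<bar> * \<bar>of_int DX\<bar> \<le> \<bar>a1\<bar> * \<bar>of_int DX\<bar>" using assms(3) by (intro mult_right_mono) auto
  moreover have "\<bar>a1\<bar> * \<bar>of_int DY\<bar> > 0" using DY a1 by simp
  have "\<bar>of_int DY::real\<bar> < \<bar>of_int DX\<bar>"
  proof (rule ccontr)
    assume "\<not> \<bar>of_int DY::real\<bar> < \<bar>of_int DX\<bar>"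
    then have h: "\<bar>of_int DX::real\<bar> \<le> \<bar>of_int DY\<bar>" by simp
    have "\<bar>a0\<bar> * \<bar>of_int DX::real\<bar> < \<bar>a1\<bar> * \<bar>of_int DY\<bar>"
    proof -
      have "\<bar>a0\<bar> * \<bar>of_int DX::real\<bar> \<le> \<bar>a0\<bar> * \<bar>of_int DY\<bar>" using h by (intro mult_left_mono) auto
      also have "\<dots> < \<bar>a1\<bar> * \<bar>of_int DY\<bar>" using assms(3) DY by (intro mult_strict_right_mono) auto
      finally show ?thesis .
    qed
    then show False using e by simp
  qed
  then have "\<bar>DY\<bar> < \<bar>DX\<bar>" by linarith
  then show ?thesis using DY by linarith
qed

lemma sepC:
  fixes a0 a1 :: real and DX DY :: int
  assumes "a0 * of_int DX + a1 * of_int DY = 0" "a0*a1 < 0" "DX \<noteq> 0 \<or> DY \<noteq> 0"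
  shows "\<bar>DX + DY\<bar> \<ge> 2"
proof -
  have a0: "a0 \<noteq> 0" and a1: "a1 \<noteq> 0" using assms(2) by auto
  have DY: "DY \<noteq> 0"
  proof
    assume "DY = 0" then have "a0 * of_int DX = 0" using assms(1) by simp
    then have "DX = 0" using a0 by simp
    then show False using assms(3) \<open>DY = 0\<close> by simp
  qed
  have DX: "DX \<noteq> 0"
  proof
    assume "DX = 0" then have "a1 * of_int DY = 0" using assms(1) by simp
    then show False using a1 DY by simp
  qed
  have "(a0 * a1) * (of_int DX * of_int DY) = - ((a1 * of_int DY) * (a1 * of_int DY))"
  proof -
    have "a0 * of_int DX = - (a1 * of_int DY)" using assms(1) by linarith
    then have "(a0 * of_int DX) * (a1 * of_int DY) = - (a1 * of_int DY) * (a1 * of_int DY)" by simp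
    then show ?thesis by (simp add: algebra_simps)
  qed
  then have "(a0 * a1) * (of_int DX * of_int DY) \<le> 0" by (simp add: zero_le_square)
  then have "of_int DX * of_int DY \<ge> (0::real)" using assms(2)
    by (metis mult_neg_neg not_le order_less_irrefl zero_less_mult_iff)
  then have "DX * DY \<ge> 0" by (metis of_int_0_le_iff of_int_mult)
  then have "DX * DY > 0" using DX DY by (simp add: order_le_less)
  then have "(DX > 0 \<and> DY > 0) \<or> (DX < 0 \<and> DY < 0)" by (simp add: zero_less_mult_iff)
  then show ?thesis by auto
qed



definition Sset :: "nat \<Rightarrow> (nat \<times> nat) set" where "Sset j = {(x,y). inS j x y}"

lemma Sset_sub: "Sset j \<subseteq> {..2*j} \<times> {..2*j}"
  unfolding Sset_def by (auto dest: inS_hex)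

lemma finite_Sset: "finite (Sset j)"
  using Sset_sub finite_subset by blast

lemma finite_rowX: "finite {y. inS j c y}"
  by (rule finite_subset[of _ "{..2*j}"]) (auto dest: inS_hex)

lemma finite_rowY: "finite {x. inS j x c}"
  by (rule finite_subset[of _ "{..2*j}"]) (auto dest: inS_hex)

lemma card_Sset: "card (Sset j) = (2*j+1)*(j+1)"
proof -
  have "Sset j = Sigma {..2*j} (\<lambda>c. {y. inS j c y})"
    unfolding Sset_def by (auto dest: inS_hex)
  then have "card (Sset j) = (\<Sum>c\<in>{..2*j}. card {y. inS j c y})"
    using finite_rowX by (simp add: card_SigmaI)
  also have "\<dots> = (\<Sum>c\<in>{..2*j}. j+1)" using rowX_card by (intro sum.cong) auto
  finally show ?thesis by simp
qed

lemma line_count: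
  fixes a0 a1 b :: real
  assumes "a0 \<noteq> 0 \<or> a1 \<noteq> 0"
  shows "card {s \<in> Sset j. a0 * real (fst s) + a1 * real (snd s) = b} \<le> j+1"
proof -
  let ?B = "{s \<in> Sset j. a0 * real (fst s) + a1 * real (snd s) = b}"
  have fin: "finite ?B" using finite_Sset by auto
  show ?thesis
  proof (cases "?B = {}")
    case True then show ?thesis by (metis card.empty le0)
  next
    case False
    then obtain x0 y0 where s0: "(x0,y0) \<in> ?B" by auto
    have diff: "a0 * (real x - real x0) + a1 * (real y - real y0) = 0" if "(x,y) \<in> ?B" for x y
    proof -
      have "a0 * real x + a1 * real y = b" "a0 * real x0 + a1 * real y0 = b" using that s0 by auto
      then show ?thesis by (simp add: algebra_simps)
    qed
    have pairdiff: "a0 * of_int (int (fst s) - int (fst t)) + a1 * of_int (int (snd s) - int (snd t)) = 0"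
      if "s \<in> ?B" "t \<in> ?B" for s t
    proof -
      have "a0 * real (fst s) + a1 * real (snd s) = b" "a0 * real (fst t) + a1 * real (snd t) = b" using that by auto
      then show ?thesis by (simp add: algebra_simps)
    qed
    have nz: "int (fst s) - int (fst t) \<noteq> 0 \<or> int (snd s) - int (snd t) \<noteq> 0" if "s \<noteq> t" for s t :: "nat \<times> nat"
      using that by (cases s, cases t) auto
    have inB: "inS j (fst s) (snd s)" if "s \<in> ?B" for s
      using that by (cases s) (auto simp: Sset_def)
    consider "a1 = 0" | "a0 = 0" | "a0 = a1" | "a0 \<noteq> 0" "a1 \<noteq> 0" "a0 \<noteq> a1" by blast
    then show ?thesis
    proof cases
      case 1
      then have a0: "a0 \<noteq> 0" using assms by simp
      have "?B \<subseteq> (\<lambda>y. (x0,y)) ` {y. inS j x0 y}"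
      proof
        fix s assume sB: "s \<in> ?B"
        obtain x y where s: "s = (x,y)" by (cases s)
        have "a0 * (real x - real x0) = 0" using diff[of x y] sB s 1 by simp
        then have "x = x0" using a0 by simp
        then show "s \<in> (\<lambda>y. (x0,y)) ` {y. inS j x0 y}" using sB s by (auto simp: Sset_def)
      qed
      then have "card ?B \<le> card ((\<lambda>y. (x0,y)) ` {y. inS j x0 y})"
        by (intro card_mono) (auto intro: finite_rowX)
      also have "\<dots> \<le> card {y. inS j x0 y}" by (rule card_image_le) (rule finite_rowX)
      also have "\<dots> \<le> j+1" by (rule rowX_le)
      finally show ?thesis .
    next
      case 2
      then have a1: "a1 \<noteq> 0" using assms by simp
      have "?B \<subseteq> (\<lambda>x. (x,y0)) ` {x. inS j x y0}"
      proof
        fix s assume sB: "s \<in> ?B"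
        obtain x y where s: "s = (x,y)" by (cases s)
        have "a1 * (real y - real y0) = 0" using diff[of x y] sB s 2 by simp
        then have "y = y0" using a1 by simp
        then show "s \<in> (\<lambda>x. (x,y0)) ` {x. inS j x y0}" using sB s by (auto simp: Sset_def)
      qed
      then have "card ?B \<le> card ((\<lambda>x. (x,y0)) ` {x. inS j x y0})"
        by (intro card_mono) (auto intro: finite_rowY)
      also have "\<dots> \<le> card {x. inS j x y0}" by (rule card_image_le) (rule finite_rowY)
      also have "\<dots> \<le> j+1" by (rule rowY_le)
      finally show ?thesis .
    next
      case 3
      then have a0: "a0 \<noteq> 0" using assms by auto
      define c where "c = x0 + y0"
      have "?B \<subseteq> (\<lambda>x. (x,c-x)) ` {x. x \<le> c \<and> inS j x (c-x)}"
      proof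
        fix s assume sB: "s \<in> ?B"
        obtain x y where s: "s = (x,y)" by (cases s)
        have "a0 * ((real x + real y) - (real x0 + real y0)) = 0" using diff[of x y] sB s 3
          by (simp add: algebra_simps)
        then have "real x + real y = real x0 + real y0" using a0 by simp
        then have "x + y = c" unfolding c_def by linarith
        then have "s = (x, c - x)" "x \<le> c" using s by auto
        then show "s \<in> (\<lambda>x. (x,c-x)) ` {x. x \<le> c \<and> inS j x (c-x)}" using sB by (auto simp: Sset_def)
      qed
      moreover have "finite {x. x \<le> c \<and> inS j x (c-x)}" by auto
      ultimately have "card ?B \<le> card ((\<lambda>x. (x,c-x)) ` {x. x \<le> c \<and> inS j x (c-x)})"
        by (intro card_mono) auto
      also have "\<dots> \<le> card {x. x \<le> c \<and> inS j x (c-x)}" by (rule card_image_le) auto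
      also have "\<dots> \<le> j+1" by (rule rowZ_le)
      finally show ?thesis .
    next
      case 4
      have cases3: "(a0*a1 > 0 \<and> \<bar>a0\<bar> < \<bar>a1\<bar>) \<or> (a0*a1 > 0 \<and> \<bar>a1\<bar> < \<bar>a0\<bar>) \<or> a0*a1 < 0"
      proof -
        have nz: "a0*a1 \<noteq> 0" using 4 by simp
        have h: "\<bar>a0\<bar> = \<bar>a1\<bar> \<Longrightarrow> a0*a1 > 0 \<Longrightarrow> False"
          using 4 by (metis abs_eq_iff minus_mult_right neg_less_0_iff_less not_square_less_zero)
        show ?thesis
        proof (cases "a0*a1 < 0")
          case True then show ?thesis by simp
        next
          case False
          then have p: "a0*a1 > 0" using nz by linarith
          consider "\<bar>a0\<bar> < \<bar>a1\<bar>" | "\<bar>a0\<bar> = \<bar>a1\<bar>" | "\<bar>a1\<bar> < \<bar>a0\<bar>" by linarith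
          then show ?thesis using p h by cases auto
        qed
      qed
      then consider "a0*a1 > 0" "\<bar>a0\<bar> < \<bar>a1\<bar>" | "a0*a1 > 0" "\<bar>a1\<bar> < \<bar>a0\<bar>" | "a0*a1 < 0" by blast
      then show ?thesis
      proof cases
        case 1
        show ?thesis
        proof (rule sep_card[OF fin, of fst])
          fix s assume "s \<in> ?B" then show "fst s \<le> 2*j" using inB inS_hex by blast
        next
          fix s t assume st: "s \<in> ?B" "t \<in> ?B" "s \<noteq> t"
          have "\<bar>int (fst s) - int (fst t)\<bar> \<ge> 2"
            using sepA[OF pairdiff[OF st(1,2)] 1 nz[OF st(3)]] .
          then show "fst s + 2 \<le> fst t \<or> fst t + 2 \<le> fst s" by linarith
        qed
      next
        case 2
        show ?thesis
        proof (rule sep_card[OF fin, of snd])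
          fix s assume "s \<in> ?B" then show "snd s \<le> 2*j" using inB inS_hex by blast
        next
          fix s t assume st: "s \<in> ?B" "t \<in> ?B" "s \<noteq> t"
          have e: "a1 * of_int (int (snd s) - int (snd t)) + a0 * of_int (int (fst s) - int (fst t)) = 0"
            using pairdiff[OF st(1,2)] by linarith
          have "\<bar>int (snd s) - int (snd t)\<bar> \<ge> 2"
            using sepA[OF e] 2 nz[OF st(3)] by (auto simp: mult.commute)
          then show "snd s + 2 \<le> snd t \<or> snd t + 2 \<le> snd s" by linarith
        qed
      next
        case 3
        show ?thesis
        proof (rule sep_card[OF fin, of "\<lambda>s. fst s + snd s - j"])
          fix s assume "s \<in> ?B" then show "fst s + snd s - j \<le> 2*j" using inB inS_hex by fastforce
        next
          fix s t assume st: "s \<in> ?B" "t \<in> ?B" "s \<noteq> t"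
          have "\<bar>(int (fst s) - int (fst t)) + (int (snd s) - int (snd t))\<bar> \<ge> 2"
            using sepC[OF pairdiff[OF st(1,2)] 3 nz[OF st(3)]] .
          moreover have "j \<le> fst s + snd s" "j \<le> fst t + snd t" using inB[OF st(1)] inB[OF st(2)] inS_hex by blast+
          ultimately show "fst s + snd s - j + 2 \<le> fst t + snd t - j \<or> fst t + snd t - j + 2 \<le> fst s + snd s - j"
            by linarith
        qed
      qed
    qed
  qed
qed



definition pt :: "nat \<times> nat \<Rightarrow> nat \<Rightarrow> real" where
  "pt s = (\<lambda>i. real (if i = 0 then fst s else if i = 1 then snd s else 0))"

lemma sum2: "(\<Sum>i<(2::nat). f i) = f 0 + (f 1 :: 'a::comm_monoid_add)"
  by (simp add: numeral_2_eq_2 add.commute)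

lemma pt_euclid: "pt s \<in> euclid_pts 2"
  unfolding euclid_pts_def pt_def by auto

lemma pt0 [simp]: "pt s 0 = real (fst s)" and pt1 [simp]: "pt s 1 = real (snd s)" and pt1' [simp]: "pt s (Suc 0) = real (snd s)"
  unfolding pt_def by auto

lemma pt_tri: assumes "s \<in> Sset j" shows "pt s \<in> tri_grid 2 (3*j+1)"
proof -
  have h: "fst s + snd s \<le> 3*j" using assms inS_hex unfolding Sset_def by (cases s) auto
  define c where "c = (\<lambda>i::nat. if i = 0 then fst s else if i = 1 then snd s else 0)"
  have "pt s = (\<lambda>i. real (c i))" unfolding pt_def c_def by simp
  moreover have "\<forall>i\<ge>2. c i = 0" unfolding c_def by auto
  moreover have "(\<Sum>i<2. c i) + 1 \<le> 3*j+1" unfolding sum2 c_def using h by simp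
  ultimately show ?thesis unfolding tri_grid_def by blast
qed

lemma hyper_count:
  assumes "affine_hyperplane 2 H"
  shows "card {s \<in> Sset j. pt s \<in> H} \<le> j+1"
proof -
  obtain a b where a: "\<exists>i<2. a i \<noteq> 0" and H: "H = {x \<in> euclid_pts 2. (\<Sum>i<2. a i * x i) = b}"
    using assms unfolding affine_hyperplane_def by blast
  have a01: "a 0 \<noteq> 0 \<or> a 1 \<noteq> 0" using a by (auto simp: less_2_cases_iff)
  have "{s \<in> Sset j. pt s \<in> H} = {s \<in> Sset j. a 0 * real (fst s) + a 1 * real (snd s) = b}"
    unfolding H sum2 using pt_euclid by auto
  then show ?thesis using line_count[OF a01] by simp
qed

lemma lower:
  assumes "frac_cover 2 (3*j+1) w"
  shows "real (2*j+1) \<le> total_weight w"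
proof -
  have nonneg: "\<And>H. 0 \<le> w H" and aff: "\<And>H. w H \<noteq> 0 \<Longrightarrow> affine_hyperplane 2 H"
    and finF: "finite {H. w H \<noteq> 0}"
    and cov: "\<And>p. p \<in> tri_grid 2 (3*j+1) \<Longrightarrow> (\<Sum>H \<in> {H. w H \<noteq> 0 \<and> p \<in> H}. w H) \<ge> 1"
    using assms unfolding frac_cover_def by auto
  let ?F = "{H. w H \<noteq> 0}" and ?S = "Sset j"
  have "real (card ?S) = (\<Sum>s\<in>?S. 1)" by simp
  also have "\<dots> \<le> (\<Sum>s\<in>?S. \<Sum>H\<in>{H \<in> ?F. pt s \<in> H}. w H)"
  proof (rule sum_mono)
    fix s assume "s \<in> ?S"
    then have "1 \<le> (\<Sum>H \<in> {H. w H \<noteq> 0 \<and> pt s \<in> H}. w H)" using cov pt_tri by blast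
    then show "1 \<le> (\<Sum>H\<in>{H \<in> ?F. pt s \<in> H}. w H)" by simp
  qed
  also have "\<dots> = (\<Sum>H\<in>?F. \<Sum>s\<in>{s \<in> ?S. pt s \<in> H}. w H)"
    by (rule sum.swap_restrict) (simp_all add: finite_Sset finF)
  also have "\<dots> = (\<Sum>H\<in>?F. w H * real (card {s \<in> ?S. pt s \<in> H}))" by (simp add: mult.commute)
  also have "\<dots> \<le> (\<Sum>H\<in>?F. w H * real (j+1))"
  proof (rule sum_mono)
    fix H assume "H \<in> ?F"
    then have "card {s \<in> ?S. pt s \<in> H} \<le> j+1" using aff hyper_count by blast
    then show "w H * real (card {s \<in> ?S. pt s \<in> H}) \<le> w H * real (j+1)"
      using nonneg by (intro mult_left_mono) auto
  qed
  also have "\<dots> = real (j+1) * total_weight w" unfolding total_weight_def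
    by (simp add: sum_distrib_left mult.commute)
  finally have "real ((2*j+1)*(j+1)) \<le> real (j+1) * total_weight w" unfolding card_Sset .
  moreover have "real ((2*j+1)*(j+1)) = real (j+1) * real (2*j+1)" by (simp only: of_nat_mult mult.commute)
  ultimately have "real (j+1) * real (2*j+1) \<le> real (j+1) * total_weight w" by simp
  then show ?thesis by (rule mult_left_le_imp_le) simp
qed



definition lineS :: "nat \<Rightarrow> nat \<times> nat \<Rightarrow> (nat \<Rightarrow> real) set" where
 "lineS j d = {v \<in> euclid_pts 2. (if fst d = 0 then v 0 else if fst d = 1 then v 1 else v 0 + v 1)
     = real (if fst d = 0 \<or> fst d = 1 then snd d else 3*j - snd d)}"

definition Dset :: "nat \<Rightarrow> (nat \<times> nat) set" where "Dset j = {0,1,2} \<times> {..<2*j}"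

definition cw :: "nat \<Rightarrow> nat \<Rightarrow> real" where "cw j i = (real (2*j) - real i) / real (3*j)"

definition Wt :: "nat \<Rightarrow> (nat \<Rightarrow> real) set \<Rightarrow> real" where
 "Wt j H = (if H \<in> lineS j ` Dset j then cw j (snd (the_inv_into (Dset j) (lineS j) H)) else 0)"

lemma sum_prod: "finite A \<Longrightarrow> finite B \<Longrightarrow> (\<Sum>d\<in>A \<times> B. f d) = (\<Sum>k\<in>A. \<Sum>i\<in>B. f (k,i))"
  by (subst sum.cartesian_product) simp

lemma line_aff: "affine_hyperplane 2 (lineS j d)"
proof -
  define a where "a = (\<lambda>i::nat. if fst d = 0 then (if i = 0 then 1 else 0) else if fst d = 1 then (if i = 1 then 1 else 0) else (1::real))"
  define b where "b = real (if fst d = 0 \<or> fst d = 1 then snd d else 3*j - snd d)"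
  have "a 0 \<noteq> 0 \<or> a 1 \<noteq> 0" unfolding a_def by auto
  moreover have "(0::nat) < 2" "(1::nat) < 2" by auto
  ultimately have "\<exists>i<2. a i \<noteq> 0" by blast
  moreover have "lineS j d = {x \<in> euclid_pts 2. (\<Sum>i<2. a i * x i) = b}"
    unfolding lineS_def sum2 a_def b_def by (cases "fst d = 0"; cases "fst d = 1") auto
  ultimately show ?thesis unfolding affine_hyperplane_def by blast
qed

lemma real_add_eq: "real a + real b = real c \<longleftrightarrow> a + b = c"
  by (metis of_nat_add of_nat_eq_iff)

lemma mem_line: "pt s \<in> lineS j d \<longleftrightarrow>
   (if fst d = 0 then fst s = snd d else if fst d = 1 then snd s = snd d else fst s + snd s = 3*j - snd d)"
  unfolding lineS_def using pt_euclid[of s] by (auto simp: real_add_eq)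

definition Mline :: "nat \<Rightarrow> nat \<Rightarrow> nat \<Rightarrow> nat \<Rightarrow> nat \<Rightarrow> bool" where
  "Mline j k i x y \<longleftrightarrow> (if k = 0 then x = i else if k = 1 then y = i else x + y = 3*j - i)"

lemma mem_line': "pt (x,y) \<in> lineS j (k,i) \<longleftrightarrow> Mline j k i x y"
  unfolding mem_line Mline_def by simp

lemma inj_line: assumes "1 \<le> j" shows "inj_on (lineS j) (Dset j)"
proof (rule inj_onI)
  fix d d' assume d: "d \<in> Dset j" and d': "d' \<in> Dset j" and eq: "lineS j d = lineS j d'"
  obtain k i where ki: "d = (k,i)" by (cases d)
  obtain k' i' where ki': "d' = (k',i')" by (cases d')
  have k: "k = 0 \<or> k = 1 \<or> k = 2" "i < 2*j" using d ki unfolding Dset_def by auto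
  have k': "k' = 0 \<or> k' = 1 \<or> k' = 2" "i' < 2*j" using d' ki' unfolding Dset_def by auto
  have E: "\<And>x y. pt (x,y) \<in> lineS j (k,i) \<longleftrightarrow> pt (x,y) \<in> lineS j (k',i')"
    using eq ki ki' by simp
  have E': "\<And>x y. Mline j k i x y \<longleftrightarrow> Mline j k' i' x y"
    using E unfolding mem_line' by simp
  have "k = k' \<and> i = i'"
  proof -
    consider "k = 0" | "k = 1" | "k = 2" using k by blast
    then show ?thesis
    proof cases
      case 1
      have "Mline j k' i' i 0" "Mline j k' i' i 1" using E'[of i 0] E'[of i 1] 1 by (simp_all add: Mline_def)
      then show ?thesis using k'(1) 1 by (elim disjE) (simp_all add: Mline_def)
    next
      case 2
      have "Mline j k' i' 0 i" "Mline j k' i' 1 i" using E'[of 0 i] E'[of 1 i] 2 by (simp_all add: Mline_def)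
      then show ?thesis using k'(1) 2 by (elim disjE) (simp_all add: Mline_def)
    next
      case 3
      have "Mline j k' i' (3*j-i) 0" "Mline j k' i' 0 (3*j-i)" using E'[of "3*j-i" 0] E'[of 0 "3*j-i"] 3 k(2)
        by (simp_all add: Mline_def)
      then show ?thesis using k'(1) 3 k(2) k'(2) assms by (elim disjE) (simp_all add: Mline_def)
    qed
  qed
  then show "d = d'" using ki ki' by simp
qed

lemma cw_pos: "i < 2*j \<Longrightarrow> 0 < cw j i"
  unfolding cw_def by (simp add: field_simps)

lemma Wt_line: assumes "1 \<le> j" "d \<in> Dset j" shows "Wt j (lineS j d) = cw j (snd d)"
  unfolding Wt_def using assms the_inv_into_f_f[OF inj_line[OF assms(1)] assms(2)] by auto

lemma Wt_nz: assumes "1 \<le> j" shows "{H. Wt j H \<noteq> 0} = lineS j ` Dset j"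
proof
  show "{H. Wt j H \<noteq> 0} \<subseteq> lineS j ` Dset j" unfolding Wt_def by (auto split: if_splits)
  show "lineS j ` Dset j \<subseteq> {H. Wt j H \<noteq> 0}"
  proof
    fix H assume "H \<in> lineS j ` Dset j"
    then obtain d where d: "d \<in> Dset j" "H = lineS j d" by auto
    have "snd d < 2*j" using d unfolding Dset_def by auto
    then have "0 < cw j (snd d)" by (rule cw_pos)
    then show "H \<in> {H. Wt j H \<noteq> 0}" using Wt_line[OF assms d(1)] d by auto
  qed
qed

lemma gauss_real: "2 * (\<Sum>i<n. real i) = real n * (real n - 1)"
  by (induction n) (auto simp: algebra_simps)

lemma total_Wt: assumes "1 \<le> j" shows "total_weight (Wt j) = real (2*j+1)"
proof -
  have "total_weight (Wt j) = (\<Sum>H\<in>lineS j ` Dset j. Wt j H)"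
    unfolding total_weight_def Wt_nz[OF assms] ..
  also have "\<dots> = (\<Sum>d\<in>Dset j. Wt j (lineS j d))"
    by (rule sum.reindex[OF inj_line[OF assms], unfolded comp_def])
  also have "\<dots> = (\<Sum>d\<in>Dset j. cw j (snd d))" using Wt_line[OF assms] by (intro sum.cong) auto
  also have "\<dots> = (\<Sum>k\<in>{0::nat,1,2}. \<Sum>i<2*j. cw j i)"
  proof -
    have "(\<Sum>k\<in>{0::nat,1,2}. \<Sum>i<2*j. cw j i) = (\<Sum>(k,i)\<in>{0::nat,1,2} \<times> {..<2*j}. cw j i)"
      by (rule sum.cartesian_product)
    then show ?thesis unfolding Dset_def by (simp add: split_def)
  qed
  also have "\<dots> = 3 * (\<Sum>i<2*j. cw j i)" by simp
  also have "(\<Sum>i<2*j. cw j i) = (\<Sum>i<2*j. (real (2*j) - real i)) / real (3*j)"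
    unfolding cw_def by (simp add: sum_divide_distrib)
  also have "(\<Sum>i<2*j. (real (2*j) - real i)) = real (2*j) * real (2*j) - (\<Sum>i<2*j. real i)"
    by (simp add: sum_subtractf)
  also have "(\<Sum>i<2*j. real i) = real (2*j) * (real (2*j) - 1) / 2"
    using gauss_real[of "2*j"] by simp
  finally have tw: "total_weight (Wt j) = 3 * ((real (2*j) * real (2*j) - real (2*j) * (real (2*j) - 1) / 2) / real (3*j))" .
  have n: "real (2*j) * real (2*j) - real (2*j) * (real (2*j) - 1) / 2 = real j * (2*real j + 1)"
    by (simp add: field_simps)
  have jp: "real j \<noteq> 0" using assms by simp
  have "3 * (real j * (2*real j + 1) / real (3*j)) = 2*real j + 1" using jp by (simp add: field_simps)
  then show ?thesis unfolding tw n by simp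
qed

lemma cover_Wt: assumes "1 \<le> j" shows "frac_cover 2 (3*j+1) (Wt j)"
  unfolding frac_cover_def
proof (intro conjI allI impI ballI)
  fix H show "0 \<le> Wt j H"
  proof (cases "H \<in> lineS j ` Dset j")
    case True
    then obtain d where d: "d \<in> Dset j" "H = lineS j d" by auto
    then have "snd d < 2*j" unfolding Dset_def by auto
    then have "0 < cw j (snd d)" by (rule cw_pos)
    then show ?thesis using Wt_line[OF assms d(1)] d by auto
  next
    case False then show ?thesis unfolding Wt_def by simp
  qed
next
  fix H assume "Wt j H \<noteq> 0"
  then have "H \<in> lineS j ` Dset j" using Wt_nz[OF assms] by auto
  then obtain d where "H = lineS j d" by auto
  then show "affine_hyperplane 2 H" using line_aff by simp
next
  show "finite {H. Wt j H \<noteq> 0}" unfolding Wt_nz[OF assms] Dset_def by auto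
next
  fix p assume "p \<in> tri_grid 2 (3*j+1)"
  then obtain c where c: "p = (\<lambda>i. real (c i))" "\<forall>i\<ge>2. c i = 0" "(\<Sum>i<2. c i) + 1 \<le> 3*j+1"
    unfolding tri_grid_def by blast
  define x where "x = c 0"
  define y where "y = c 1"
  have xy: "x + y \<le> 3*j" using c(3) unfolding sum2 x_def y_def by simp
  have p: "p = pt (x,y)"
  proof
    fix i show "p i = pt (x,y) i" unfolding c(1) pt_def x_def y_def using c(2)
      by (cases "i = 0"; cases "i = 1") auto
  qed
  let ?M = "\<lambda>d::nat\<times>nat. if fst d = 0 then x = snd d else if fst d = 1 then y = snd d else x + y = 3*j - snd d"
  have "{H. Wt j H \<noteq> 0 \<and> p \<in> H} = lineS j ` {d \<in> Dset j. p \<in> lineS j d}"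
  proof -
    have nz: "\<And>H. Wt j H \<noteq> 0 \<longleftrightarrow> H \<in> lineS j ` Dset j" using Wt_nz[OF assms] by blast
    show ?thesis by (auto simp: nz)
  qed
  then have "(\<Sum>H \<in> {H. Wt j H \<noteq> 0 \<and> p \<in> H}. Wt j H) = (\<Sum>H \<in> lineS j ` {d \<in> Dset j. p \<in> lineS j d}. Wt j H)"
    by simp
  also have "\<dots> = (\<Sum>d \<in> {d \<in> Dset j. p \<in> lineS j d}. Wt j (lineS j d))"
    by (rule sum.reindex[unfolded comp_def]) (rule inj_on_subset[OF inj_line[OF assms]], auto)
  also have "\<dots> = (\<Sum>d \<in> {d \<in> Dset j. ?M d}. cw j (snd d))"
    unfolding p mem_line using Wt_line[OF assms] by (intro sum.cong) auto
  also have "\<dots> = (\<Sum>d \<in> Dset j. if ?M d then cw j (snd d) else 0)"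
    by (rule sum.inter_filter) (simp add: Dset_def)
  also have "\<dots> = (\<Sum>k\<in>{0::nat,1,2}. \<Sum>i<2*j. if ?M (k,i) then cw j i else 0)"
    unfolding Dset_def by (subst sum_prod) (simp_all cong: if_cong)
  also have "\<dots> = (\<Sum>i<2*j. if x = i then cw j i else 0) + ((\<Sum>i<2*j. if y = i then cw j i else 0)
                 + (\<Sum>i<2*j. if 3*j - (x+y) = i then cw j i else 0))"
  proof -
    have "(\<Sum>i<2*j. if x + y = 3*j - i then cw j i else 0) = (\<Sum>i<2*j. if 3*j - (x+y) = i then cw j i else 0)"
      using xy by (intro sum.cong) auto
    then show ?thesis by simp
  qed
  also have "\<dots> = (if x < 2*j then cw j x else 0) + ((if y < 2*j then cw j y else 0)
                 + (if 3*j - (x+y) < 2*j then cw j (3*j - (x+y)) else 0))"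
    by (simp add: sum.delta)
  finally have S: "(\<Sum>H \<in> {H. Wt j H \<noteq> 0 \<and> p \<in> H}. Wt j H) = \<dots>" .
  have lb: "(real (2*j) - real t) / real (3*j) \<le> (if t < 2*j then cw j t else 0)" for t
  proof (cases "t < 2*j")
    case True then show ?thesis unfolding cw_def by simp
  next
    case False then have "real (2*j) - real t \<le> 0" by simp
    then have "(real (2*j) - real t) / real (3*j) \<le> 0" by (rule divide_nonpos_nonneg) simp
    then show ?thesis using False by simp
  qed
  have "1 = (real (2*j) - real x) / real (3*j) + ((real (2*j) - real y) / real (3*j)
             + (real (2*j) - real (3*j - (x+y))) / real (3*j))"
    using assms xy by (simp add: field_simps of_nat_diff)
  also have "\<dots> \<le> (if x < 2*j then cw j x else 0) + ((if y < 2*j then cw j y else 0)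
                 + (if 3*j - (x+y) < 2*j then cw j (3*j - (x+y)) else 0))"
    by (intro add_mono lb)
  finally show "1 \<le> (\<Sum>H \<in> {H. Wt j H \<noteq> 0 \<and> p \<in> H}. Wt j H)" unfolding S .
qed



definition W0 :: "(nat \<Rightarrow> real) set \<Rightarrow> real" where
  "W0 H = (if H = lineS 0 (0,0) then 1 else 0)"

lemma W0_nz: "{H. W0 H \<noteq> 0} = {lineS 0 (0,0)}" unfolding W0_def by auto

lemma cover_W0: "frac_cover 2 1 W0"
  unfolding frac_cover_def
proof (intro conjI allI impI ballI)
  fix H show "0 \<le> W0 H" unfolding W0_def by simp
next
  fix H assume "W0 H \<noteq> 0"
  then have "H = lineS 0 (0,0)" unfolding W0_def by (auto split: if_splits)
  then show "affine_hyperplane 2 H" using line_aff by simp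
next
  show "finite {H. W0 H \<noteq> 0}" unfolding W0_nz by simp
next
  fix p assume "p \<in> tri_grid 2 1"
  then obtain c where c: "p = (\<lambda>i. real (c i))" "\<forall>i\<ge>2. c i = 0" "(\<Sum>i<2. c i) + 1 \<le> 1"
    unfolding tri_grid_def by blast
  have c0: "c 0 = 0" "c 1 = 0" using c(3) unfolding sum2 by auto
  have p: "p = pt (0,0)"
  proof
    fix i show "p i = pt (0,0) i" unfolding c(1) pt_def using c(2) c0
      by (cases "i = 0"; cases "i = 1") auto
  qed
  have "p \<in> lineS 0 (0,0)" unfolding p mem_line by simp
  then have "{H. W0 H \<noteq> 0 \<and> p \<in> H} = {lineS 0 (0,0)}" unfolding W0_def by auto
  then show "1 \<le> (\<Sum>H \<in> {H. W0 H \<noteq> 0 \<and> p \<in> H}. W0 H)" unfolding W0_def by simp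
qed

lemma total_W0: "total_weight W0 = 1"
  unfolding total_weight_def W0_nz unfolding W0_def by simp

theorem mainTheorem1:
  fixes j :: nat
  shows "f_star (3 * j + 1) 2 = real (2 * j + 1)"
proof -
  obtain w0 where w0: "frac_cover 2 (3*j+1) w0" "total_weight w0 = real (2*j+1)"
  proof (cases "j = 0")
    case True
    then show ?thesis using that cover_W0 total_W0 by simp
  next
    case False
    then have "1 \<le> j" by simp
    then show ?thesis using that cover_Wt total_Wt by blast
  qed
  show ?thesis unfolding f_star_def
  proof (rule cInf_eq_minimum)
    show "real (2 * j + 1) \<in> {total_weight w |w. frac_cover 2 (3 * j + 1) w}" using w0 by force
  next
    fix x assume "x \<in> {total_weight w |w. frac_cover 2 (3 * j + 1) w}"
    then show "real (2 * j + 1) \<le> x" using lower by blast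
  qed
qed


end
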